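(* Let $T$ be a tree with $m$ edges satisfying $\sum_{e_{uv}\in E(T)}(d_u+d_v)=4m$, and let $s$ be a positive integer. Then the $s$-th subdivision tree $T_s$ is neutral.
   Context: All graphs are finite, simple and connected; $d_u$ denotes the degree of $u$ and sums over edges $e_{uv}$ count each edge once. The $s$-th subdivision graph $G_s$ of a graph $G$ is obtained by inserting $s$ new vertices into each edge of $G$ (i.e., replacing each edge by a path with $s$ internal vertices). For a graph $G=(V,E)$ with $m=|E|\geq1$, the assortativity coefficient is $$r(G)=\frac{m^{-1}\sum_{e_{uv}\in E} d_{u}d_{v}-\Big[m^{-1}\sum_{e_{uv}\in E} \tfrac{1}{2}(d_{u}+d_{v})\Big]^{2}}{m^{-1}\sum_{e_{uv}\in E} \tfrac{1}{2}(d^{2}_{u}+d^{2}_{v})-\Big[m^{-1}\sum_{e_{uv}\in E} \tfrac{1}{2}(d_{u}+d_{v})\Big]^{2}},$$ defined whenever the denominator is nonzero; $G$ is neutral if $r(G)$ is defined and equals $0$. *)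

theory Defs
  imports Complex_Main
begin

definition simple_graph :: "'a set \<Rightarrow> 'a set set \<Rightarrow> bool" where
  "simple_graph V E \<longleftrightarrow> finite V \<and>
     (\<forall>e\<in>E. \<exists>u v. e = {u, v} \<and> u \<noteq> v \<and> u \<in> V \<and> v \<in> V)"

definition adj :: "'a set set \<Rightarrow> 'a \<Rightarrow> 'a \<Rightarrow> bool" where
  "adj E u v \<longleftrightarrow> {u, v} \<in> E"

definition connected_graph :: "'a set \<Rightarrow> 'a set set \<Rightarrow> bool" where
  "connected_graph V E \<longleftrightarrow> V \<noteq> {} \<and> (\<forall>u\<in>V. \<forall>v\<in>V. (adj E)\<^sup>*\<^sup>* u v)"

definition is_cycle :: "'a set set \<Rightarrow> 'a list \<Rightarrow> bool" where
  "is_cycle E cs \<longleftrightarrow> length cs \<ge> 3 \<and> distinct cs \<and>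
     (\<forall>i. Suc i < length cs \<longrightarrow> adj E (cs ! i) (cs ! Suc i)) \<and>
     adj E (last cs) (hd cs)"

definition is_tree :: "'a set \<Rightarrow> 'a set set \<Rightarrow> bool" where
  "is_tree V E \<longleftrightarrow> simple_graph V E \<and> connected_graph V E \<and> (\<nexists>cs. is_cycle E cs)"

definition degree :: "'a set set \<Rightarrow> 'a \<Rightarrow> nat" where
  "degree E u = card {e \<in> E. u \<in> e}"

text \<open>Original vertex v becomes Inl v; the i-th inserted vertex
  (1 \<le> i \<le> s) on edge e becomes Inr (e, i). The path runs from a chosen endpoint
  end1 e through Inr (e,1), ..., Inr (e,s) to the other endpoint end2 e.\<close>

definition end1 :: "'a set \<Rightarrow> 'a" where
  "end1 e = (SOME x. x \<in> e)"

definition end2 :: "'a set \<Rightarrow> 'a" where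
  "end2 e = (SOME y. y \<in> e \<and> y \<noteq> end1 e)"

definition subdiv_V :: "nat \<Rightarrow> 'a set \<Rightarrow> 'a set set \<Rightarrow> ('a + 'a set \<times> nat) set" where
  "subdiv_V s V E = Inl ` V \<union> {Inr (e, i) | e i. e \<in> E \<and> 1 \<le> i \<and> i \<le> s}"

definition subdiv_E :: "nat \<Rightarrow> 'a set set \<Rightarrow> ('a + 'a set \<times> nat) set set" where
  "subdiv_E s E =
     {{Inl (end1 e), Inr (e, 1)} | e. e \<in> E}
   \<union> {{Inr (e, i), Inr (e, Suc i)} | e i. e \<in> E \<and> 1 \<le> i \<and> i < s}
   \<union> {{Inr (e, s), Inl (end2 e)} | e. e \<in> E}"

definition assort_mean :: "'a set set \<Rightarrow> real" where
  "assort_mean E = (\<Sum>e\<in>E. (\<Sum>x\<in>e. real (degree E x)) / 2) / real (card E)"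

definition assort_num :: "'a set set \<Rightarrow> real" where
  "assort_num E = (\<Sum>e\<in>E. \<Prod>x\<in>e. real (degree E x)) / real (card E) - (assort_mean E)\<^sup>2"

definition assort_den :: "'a set set \<Rightarrow> real" where
  "assort_den E = (\<Sum>e\<in>E. (\<Sum>x\<in>e. (real (degree E x))\<^sup>2) / 2) / real (card E)
                    - (assort_mean E)\<^sup>2"

definition assortativity :: "'a set set \<Rightarrow> real" where
  "assortativity E = assort_num E / assort_den E"

text \<open>Neutral: r defined (m \<ge> 1 and nonzero denominator) and r = 0.\<close>
definition neutral :: "'a set set \<Rightarrow> bool" where
  "neutral E \<longleftrightarrow> finite E \<and> card E \<ge> 1 \<and> assort_den E \<noteq> 0 \<and> assortativity E = 0"

end

theory Submission
  imports Defs
begin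



definition gpath :: "'a set \<Rightarrow> 'a set set \<Rightarrow> 'a list \<Rightarrow> bool" where
  "gpath V E p \<longleftrightarrow> distinct p \<and> set p \<subseteq> V \<and> length p \<ge> 2 \<and>
     (\<forall>i. Suc i < length p \<longrightarrow> adj E (p ! i) (p ! Suc i))"

lemma simple_finite_E:
  assumes "simple_graph V E" shows "finite E"
proof -
  have fV: "finite V" using assms unfolding simple_graph_def by blast
  have "E \<subseteq> Pow V"
  proof
    fix e assume "e \<in> E"
    then obtain u v where "e = {u,v}" "u \<in> V" "v \<in> V" using assms unfolding simple_graph_def by blast
    thus "e \<in> Pow V" by simp
  qed
  moreover have "finite (Pow V)" using fV by simp
  ultimately show ?thesis by (rule finite_subset)
qed

lemma tree_leaf:
  assumes "is_tree V E" "E \<noteq> {}"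
  shows "\<exists>e\<in>E. \<exists>x\<in>e. degree E x = 1"
proof -
  have sg: "simple_graph V E" and nc: "\<nexists>cs. is_cycle E cs" using assms unfolding is_tree_def by auto
  have fV: "finite V" using sg unfolding simple_graph_def by blast
  have fE: "finite E" using simple_finite_E[OF sg] .
  define P where "P = {p. gpath V E p}"
  have "P \<subseteq> {xs. set xs \<subseteq> V \<and> length xs \<le> card V}"
    unfolding P_def gpath_def using distinct_card card_mono[OF fV]
    by (metis (mono_tags, lifting) Collect_mono)
  hence fP: "finite P" using finite_lists_length_le[OF fV] finite_subset by blast
  obtain e0 where "e0 \<in> E" using assms(2) by blast
  then obtain u v where uv: "e0 = {u,v}" "u \<noteq> v" "u \<in> V" "v \<in> V" using sg unfolding simple_graph_def by blast
  have "gpath V E [u,v]" unfolding gpath_def adj_def using uv \<open>e0 \<in> E\<close> by (auto simp: nth_Cons split: nat.splits)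
  hence Pne: "P \<noteq> {}" unfolding P_def by blast
  define n where "n = Max (length ` P)"
  have "n \<in> length ` P" unfolding n_def using fP Pne by (intro Max_in) auto
  then obtain p where pP: "p \<in> P" and pn: "length p = n" by blast
  have pmax: "\<And>q. q \<in> P \<Longrightarrow> length q \<le> length p" unfolding pn n_def using fP by auto
  have gp: "gpath V E p" using pP unfolding P_def by simp
  then obtain x y r where p: "p = x # y # r"
    unfolding gpath_def by (metis One_nat_def Suc_1 length_Cons less_eq_Suc_le list.exhaust list.size(3) not_less_eq_eq zero_less_Suc le_zero_eq)
  have xy: "{x,y} \<in> E" using gp unfolding gpath_def p adj_def by (metis length_Cons nth_Cons_0 nth_Cons_Suc zero_less_Suc Suc_less_eq)
  have "degree E x = 1"
  proof (rule ccontr)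
    assume d: "degree E x \<noteq> 1"
    have "{x,y} \<in> {e \<in> E. x \<in> e}" using xy by auto
    have "\<exists>e'\<in>E. x \<in> e' \<and> e' \<noteq> {x,y}"
    proof (rule ccontr)
      assume "\<not> ?thesis"
      hence "{e \<in> E. x \<in> e} \<subseteq> {{x,y}}" by blast
      hence "card {e \<in> E. x \<in> e} \<le> 1" by (metis card.empty card.insert card_mono empty_iff finite.intros(1) finite.intros(2) One_nat_def)
      moreover have "card {e \<in> E. x \<in> e} \<ge> 1" using \<open>{x,y} \<in> {e \<in> E. x \<in> e}\<close> fE
        by (metis (no_types, lifting) One_nat_def Suc_leI card_gt_0_iff empty_iff finite_subset mem_Collect_eq subsetI)
      ultimately show False using d unfolding degree_def by simp
    qed
    then obtain e' where e': "e' \<in> E" "x \<in> e'" "e' \<noteq> {x,y}" by blast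
    obtain a b where ab: "e' = {a,b}" "a \<noteq> b" "a \<in> V" "b \<in> V" using sg e'(1) unfolding simple_graph_def by blast
    obtain z where z: "e' = {x,z}" "z \<noteq> x" "z \<in> V"
    proof (cases "a = x")
      case True thus ?thesis using that ab by blast
    next
      case False hence "b = x" using ab e'(2) by blast
      thus ?thesis using that ab by (metis insert_commute)
    qed
    have zy: "z \<noteq> y" using z e' by auto
    show False
    proof (cases "z \<in> set p")
      case False
      have "gpath V E (z # p)" unfolding gpath_def
      proof (intro conjI allI impI)
        show "distinct (z # p)" using gp False by (simp add: gpath_def)
        show "set (z # p) \<subseteq> V" using gp z by (simp add: gpath_def)
        show "2 \<le> length (z # p)" using gp by (simp add: gpath_def)
        fix i assume i: "Suc i < length (z # p)"
        show "adj E ((z # p) ! i) ((z # p) ! Suc i)"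
        proof (cases i)
          case 0 thus ?thesis using e' z p unfolding adj_def by (simp add: insert_commute)
        next
          case (Suc k) thus ?thesis using gp i unfolding gpath_def by simp
        qed
      qed
      hence "z # p \<in> P" unfolding P_def by simp
      from pmax[OF this] show False by simp
    next
      case True
      then obtain j where j: "j < length p" "p ! j = z" by (meson in_set_conv_nth)
      have j2: "j \<ge> 2" using j z zy p
        by (metis One_nat_def less_2_cases not_le nth_Cons_0 nth_Cons_Suc)
      define cs where "cs = take (Suc j) p"
      have "is_cycle E cs"
        unfolding is_cycle_def
      proof (intro conjI allI impI)
        show "3 \<le> length cs" using j j2 unfolding cs_def by simp
        show "distinct cs" using gp unfolding cs_def gpath_def by simp
        fix i assume "Suc i < length cs"
        thus "adj E (cs ! i) (cs ! Suc i)" using gp unfolding cs_def gpath_def by auto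
      next
        have "last cs = z" unfolding cs_def using j by (subst last_conv_nth) auto
        moreover have "hd cs = x" unfolding cs_def p by simp
        ultimately show "adj E (last cs) (hd cs)" using e' z unfolding adj_def by (simp add: insert_commute)
      qed
      thus False using nc by blast
    qed
  qed
  thus ?thesis using xy by blast
qed



lemma end_facts:
  assumes "e = {u,v}" "u \<noteq> v"
  shows "end1 e \<in> e" "end2 e \<in> e" "end1 e \<noteq> end2 e" "e = {end1 e, end2 e}"
proof -
  show 1: "end1 e \<in> e" unfolding end1_def using assms by (metis insertI1 someI)
  have "\<exists>y. y \<in> e \<and> y \<noteq> end1 e" using assms 1 by auto
  hence 2: "end2 e \<in> e \<and> end2 e \<noteq> end1 e" unfolding end2_def by (rule someI_ex)
  thus "end2 e \<in> e" "end1 e \<noteq> end2 e" by auto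
  show "e = {end1 e, end2 e}" using 1 2 assms by auto
qed

definition sedge :: "nat \<Rightarrow> 'a set \<Rightarrow> nat \<Rightarrow> ('a + 'a set \<times> nat) set" where
  "sedge s e i = {if i = 0 then Inl (end1 e) else Inr (e, i),
                  if i = s then Inl (end2 e) else Inr (e, Suc i)}"

definition twoset :: "'a set set \<Rightarrow> bool" where
  "twoset E \<longleftrightarrow> (\<forall>e\<in>E. \<exists>u v. e = {u,v} \<and> u \<noteq> v)"

lemma sedge_mem:
  assumes "e \<in> E" "i \<le> s"
  shows "sedge s e i \<in> (\<lambda>(e,i). sedge s e i) ` (E \<times> {0..s})"
  by (rule image_eqI[where x="(e,i)"]) (simp_all add: assms)

lemma subdiv_image:
  assumes "s \<ge> 1"
  shows "subdiv_E s E = (\<lambda>(e,i). sedge s e i) ` (E \<times> {0..s})"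
proof
  show "subdiv_E s E \<subseteq> (\<lambda>(e,i). sedge s e i) ` (E \<times> {0..s})"
  proof
    fix f assume "f \<in> subdiv_E s E"
    then consider (a) e where "e \<in> E" "f = {Inl (end1 e), Inr (e, 1)}"
      | (b) e i where "e \<in> E" "1 \<le> i" "i < s" "f = {Inr (e, i), Inr (e, Suc i)}"
      | (c) e where "e \<in> E" "f = {Inr (e, s), Inl (end2 e)}"
      unfolding subdiv_E_def by blast
    thus "f \<in> (\<lambda>(e,i). sedge s e i) ` (E \<times> {0..s})"
    proof cases
      case a
      hence "f = sedge s e 0" using assms by (simp add: sedge_def)
      thus ?thesis using a(1) sedge_mem[of e E 0 s] by simp
    next
      case b
      hence "f = sedge s e i" using assms by (simp add: sedge_def)
      thus ?thesis using b sedge_mem[of e E i s] by simp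
    next
      case c
      hence "f = sedge s e s" using assms by (simp add: sedge_def)
      thus ?thesis using c(1) sedge_mem[of e E s s] by simp
    qed
  qed
next
  show "(\<lambda>(e,i). sedge s e i) ` (E \<times> {0..s}) \<subseteq> subdiv_E s E"
  proof (rule subsetI, elim imageE, clarify)
    fix e i assume ei: "e \<in> E" "i \<in> {0..s}"
    consider "i = 0" | "0 < i" "i < s" | "i = s" "i \<noteq> 0" using ei by fastforce
    thus "sedge s e i \<in> subdiv_E s E"
    proof cases
      case 1 
      hence "sedge s e i = {Inl (end1 e), Inr (e, 1)}" using assms by (simp add: sedge_def)
      thus ?thesis using ei unfolding subdiv_E_def by blast
    next
      case 2
      hence "sedge s e i = {Inr (e, i), Inr (e, Suc i)}" using assms by (simp add: sedge_def)
      hence "sedge s e i \<in> {{Inr (e, i), Inr (e, Suc i)} | e i. e \<in> E \<and> 1 \<le> i \<and> i < s}"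
        using ei 2 by (metis (mono_tags, lifting) One_nat_def Suc_leI mem_Collect_eq)
      thus ?thesis unfolding subdiv_E_def by blast
    next
      case 3
      hence "sedge s e i = {Inr (e, s), Inl (end2 e)}" using assms by (simp add: sedge_def)
      thus ?thesis using ei unfolding subdiv_E_def by blast
    qed
  qed
qed

lemma Inr_in_sedge: "Inr (e', k) \<in> sedge s e i \<longleftrightarrow> e' = e \<and> ((i \<noteq> 0 \<and> k = i) \<or> (i \<noteq> s \<and> k = Suc i))"
  unfolding sedge_def by auto

lemma Inl_in_sedge:
  assumes "end1 e \<noteq> end2 e" "s \<ge> 1" "i \<le> s"
  shows "Inl v \<in> sedge s e i \<longleftrightarrow> (i = 0 \<and> v = end1 e) \<or> (i = s \<and> v = end2 e)"
  using assms unfolding sedge_def by auto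

lemma sedge_inj:
  assumes "twoset E" "s \<ge> 1"
  shows "inj_on (\<lambda>(e,i). sedge s e i) (E \<times> {0..s})"
proof (rule inj_onI, clarify)
  fix e i e' i' assume e: "e \<in> E" "i \<in> {0..s}" "e' \<in> E" "i' \<in> {0..s}"
    and eq: "sedge s e i = sedge s e' i'"
  have d: "end1 e \<noteq> end2 e" using e assms unfolding twoset_def by (metis end_facts(3))
  have "Inr (e, max i 1) \<in> sedge s e i" using assms e unfolding sedge_def by auto
  hence ee: "e' = e" using eq Inr_in_sedge by metis
  have eq2: "sedge s e i = sedge s e i'" using eq ee by simp
  have "i = i'"
  proof (cases "i = 0 \<or> i' = 0")
    case True
    have h: "Inl (end1 e) \<in> sedge s e i \<longleftrightarrow> i = 0" "Inl (end1 e) \<in> sedge s e i' \<longleftrightarrow> i' = 0"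
      using Inl_in_sedge[OF d assms(2)] e d by auto
    have "i = 0 \<longleftrightarrow> i' = 0" using h eq2 by metis
    thus ?thesis using True by auto
  next
    case False
    have "Inr (e, i) \<in> sedge s e i" "Inr (e, i') \<in> sedge s e i'"
      using False unfolding Inr_in_sedge by auto
    hence "Inr (e, i) \<in> sedge s e i'" "Inr (e, i') \<in> sedge s e i" using eq2 by auto
    hence "i = i' \<or> i = Suc i'" "i' = i \<or> i' = Suc i" unfolding Inr_in_sedge by auto
    thus ?thesis by auto
  qed
  thus "e = e' \<and> i = i'" using ee by simp
qed

lemma sum_subdiv:
  assumes "twoset E" "s \<ge> 1"
  shows "(\<Sum>f\<in>subdiv_E s E. g f) = (\<Sum>e\<in>E. \<Sum>i=0..s. g (sedge s e i))"
proof -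
  have "(\<Sum>f\<in>subdiv_E s E. g f) = (\<Sum>p\<in>E \<times> {0..s}. g (sedge s (fst p) (snd p)))"
    unfolding subdiv_image[OF assms(2)] using sum.reindex[OF sedge_inj[OF assms]]
    by (simp add: case_prod_beta')
  also have "\<dots> = (\<Sum>e\<in>E. \<Sum>i=0..s. g (sedge s e i))"
    by (rule sum.cartesian_product[symmetric, unfolded split_def])
  finally show ?thesis .
qed



lemma card_filter_sum:
  assumes "finite A"
  shows "card {x \<in> A. P x} = (\<Sum>x\<in>A. if P x then 1 else 0)"
  using assms by (simp add: sum.If_cases Int_def)

lemma sum_split_ends:
  assumes "s \<ge> (1::nat)"
  shows "(\<Sum>i=0..s. h i) = h 0 + h s + (\<Sum>i\<in>{1..<s}. h i)"
proof -
  have "{0..s} = insert 0 (insert s {1..<s})" using assms by auto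
  thus ?thesis using assms by (simp add: add.assoc)
qed

lemma degree_subdiv_sum:
  assumes "twoset E" "finite E" "s \<ge> 1"
  shows "degree (subdiv_E s E) w = (\<Sum>e\<in>E. \<Sum>i=0..s. if w \<in> sedge s e i then 1 else 0)"
proof -
  have "finite (subdiv_E s E)" unfolding subdiv_image[OF assms(3)] using assms(2) by simp
  hence "degree (subdiv_E s E) w = (\<Sum>f\<in>subdiv_E s E. if w \<in> f then 1 else 0)"
    unfolding degree_def by (rule card_filter_sum)
  also have "\<dots> = (\<Sum>e\<in>E. \<Sum>i=0..s. if w \<in> sedge s e i then 1 else 0)"
    by (rule sum_subdiv[OF assms(1,3)])
  finally show ?thesis .
qed

lemma twoset_ends:
  assumes "twoset E" "e \<in> E"
  shows "end1 e \<noteq> end2 e" "e = {end1 e, end2 e}"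
  using assms unfolding twoset_def by (metis end_facts(3), metis end_facts(4))

lemma degree_subdiv_Inl:
  assumes "twoset E" "finite E" "s \<ge> 1"
  shows "degree (subdiv_E s E) (Inl v) = degree E v"
proof -
  have inner: "(\<Sum>i=0..s. if Inl v \<in> sedge s e i then 1 else 0) = (if v \<in> e then 1 else (0::nat))"
    if e: "e \<in> E" for e
  proof -
    note d = twoset_ends[OF assms(1) e]
    have mid: "(\<Sum>i\<in>{1..<s}. if Inl v \<in> sedge s e i then 1 else (0::nat)) = 0"
      by (rule sum.neutral) (auto simp: sedge_def)
    have "(\<Sum>i=0..s. if Inl v \<in> sedge s e i then 1 else (0::nat))
        = (if Inl v \<in> sedge s e 0 then 1 else 0) + (if Inl v \<in> sedge s e s then 1 else 0)"
      by (subst sum_split_ends[OF assms(3)], subst mid) simp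
    also have "\<dots> = (if v \<in> e then 1 else 0)"
      using Inl_in_sedge[OF d(1) assms(3)] d assms(3) by auto
    finally show ?thesis .
  qed
  have "degree (subdiv_E s E) (Inl v) = (\<Sum>e\<in>E. if v \<in> e then 1 else 0)"
    unfolding degree_subdiv_sum[OF assms] using inner by (rule sum.cong[OF refl])
  also have "\<dots> = degree E v" unfolding degree_def using card_filter_sum[OF assms(2)] by metis
  finally show ?thesis .
qed

lemma degree_subdiv_Inr:
  assumes "twoset E" "finite E" "s \<ge> 1" "e0 \<in> E" "1 \<le> j" "j \<le> s"
  shows "degree (subdiv_E s E) (Inr (e0, j)) = 2"
proof -
  have z: "(\<Sum>i=0..s. if Inr (e0, j) \<in> sedge s e i then 1 else (0::nat)) = 0" if "e \<noteq> e0" for e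
    by (rule sum.neutral) (use that in \<open>auto simp: Inr_in_sedge\<close>)
  have "degree (subdiv_E s E) (Inr (e0, j)) = (\<Sum>i=0..s. if Inr (e0, j) \<in> sedge s e0 i then 1 else 0)"
    unfolding degree_subdiv_sum[OF assms(1-3)]
  proof (subst sum.remove[OF assms(2,4)])
    have "(\<Sum>e\<in>E - {e0}. \<Sum>i=0..s. if Inr (e0, j) \<in> sedge s e i then 1 else (0::nat)) = 0"
      by (rule sum.neutral) (use z in blast)
    thus "(\<Sum>i=0..s. if Inr (e0, j) \<in> sedge s e0 i then 1 else (0::nat)) +
      (\<Sum>e\<in>E - {e0}. \<Sum>i=0..s. if Inr (e0, j) \<in> sedge s e i then 1 else 0) =
      (\<Sum>i=0..s. if Inr (e0, j) \<in> sedge s e0 i then 1 else 0)" by simp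
  qed
  also have "\<dots> = card {i \<in> {0..s}. Inr (e0, j) \<in> sedge s e0 i}"
    by (rule card_filter_sum[symmetric]) simp
  also have "{i \<in> {0..s}. Inr (e0, j) \<in> sedge s e0 i} = {j - 1, j}"
    unfolding Inr_in_sedge using assms(5,6) by auto
  also have "card {j - 1, j} = 2" using assms(5) by simp
  finally show ?thesis .
qed



lemma edge_sum_split:
  assumes "s \<ge> 1"
  shows "(\<Sum>i=0..s. \<phi> (sedge s e i)) = \<phi> {Inl (end1 e), Inr (e, 1)} + \<phi> {Inr (e, s), Inl (end2 e)}
           + (\<Sum>i\<in>{1..<s}. \<phi> {Inr (e, i), Inr (e, Suc i)})"
proof -
  have "(\<Sum>i\<in>{1..<s}. \<phi> (sedge s e i)) = (\<Sum>i\<in>{1..<s}. \<phi> {Inr (e, i), Inr (e, Suc i)})"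
    by (rule sum.cong) (auto simp: sedge_def)
  moreover have "sedge s e 0 = {Inl (end1 e), Inr (e, 1)}" "sedge s e s = {Inr (e, s), Inl (end2 e)}"
    using assms by (auto simp: sedge_def)
  ultimately show ?thesis by (subst sum_split_ends[OF assms]) simp
qed

lemma const_mid:
  assumes "s \<ge> (1::nat)" "\<And>i. 1 \<le> i \<Longrightarrow> i < s \<Longrightarrow> f i = c"
  shows "(\<Sum>i\<in>{1..<s}. f i) = (real s - 1) * (c::real)"
proof -
  have "(\<Sum>i\<in>{1..<s}. f i) = (\<Sum>i\<in>{1..<s}. c)" by (rule sum.cong) (auto simp: assms(2))
  also have "\<dots> = real (s - 1) * c" by simp
  finally show ?thesis using assms(1) by (simp add: of_nat_diff)
qed

theorem theorem1:
  fixes V :: "'a set" and E :: "'a set set" and s :: nat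
  assumes "is_tree V E"
    and "card E \<ge> 1"
    and "(\<Sum>e\<in>E. \<Sum>x\<in>e. degree E x) = 4 * card E"
    and "s \<ge> 1"
  shows "neutral (subdiv_E s E)"
proof -
  have sg: "simple_graph V E" using assms(1) unfolding is_tree_def by blast
  have fE: "finite E" by (rule simple_finite_E[OF sg])
  have ts: "twoset E" using sg unfolding simple_graph_def twoset_def by blast
  define SE where "SE = subdiv_E s E"
  define D where "D w = real (degree SE w)" for w
  define d where "d x = real (degree E x)" for x
  define A where "A e = d (end1 e)" for e
  define B where "B e = d (end2 e)" for e
  define m where "m = real (card E)"
  define r where "r = real s"
  have m0: "m > 0" using assms(2) unfolding m_def by simp
  have r1: "r \<ge> 1" using assms(4) unfolding r_def by simp
  have DInl: "D (Inl v) = d v" for v unfolding D_def d_def SE_def using degree_subdiv_Inl[OF ts fE assms(4)] by simp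
  have DInr: "D (Inr (e, j)) = 2" if "e \<in> E" "1 \<le> j" "j \<le> s" for e j
    unfolding D_def SE_def using degree_subdiv_Inr[OF ts fE assms(4) that] by simp
  have esum: "(\<Sum>x\<in>e. g x) = g (end1 e) + g (end2 e)" if "e \<in> E" for e and g :: "'a \<Rightarrow> real"
  proof -
    note t = twoset_ends[OF ts that]
    show ?thesis by (subst t(2)) (simp add: t(1))
  qed
  have cardSE: "real (card SE) = (r + 1) * m"
  proof -
    have "card SE = card (E \<times> {0..s})" unfolding SE_def subdiv_image[OF assms(4)]
      by (rule card_image[OF sedge_inj[OF ts assms(4)]])
    thus ?thesis unfolding r_def m_def by (simp add: card_cartesian_product algebra_simps)
  qed
  have sSE: "(\<Sum>f\<in>SE. g f) = (\<Sum>e\<in>E. \<Sum>i=0..s. g (sedge s e i))" for g :: "_ \<Rightarrow> real"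
    unfolding SE_def by (rule sum_subdiv[OF ts assms(4)])
  have ne: "Inl a \<noteq> Inr b" "Inr b \<noteq> Inl a" for a b by auto
  have P1: "(\<Sum>i=0..s. \<Prod>x\<in>sedge s e i. D x) = 2 * (A e + B e) + 4 * (r - 1)" if e: "e \<in> E" for e
  proof -
    have "(\<Sum>i\<in>{1..<s}. \<Prod>x\<in>{Inr (e, i), Inr (e, Suc i)}. D x) = (r - 1) * 4"
      unfolding r_def by (rule const_mid[OF assms(4)]) (simp add: DInr[OF e])
    thus ?thesis unfolding edge_sum_split[OF assms(4)] using DInr[OF e, of 1] DInr[OF e, of s] assms(4)
      by (simp add: DInl A_def B_def algebra_simps)
  qed
  have P2: "(\<Sum>i=0..s. (\<Sum>x\<in>sedge s e i. D x) / 2) = (A e + B e) / 2 + 2 * r" if e: "e \<in> E" for e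
  proof -
    have "(\<Sum>i\<in>{1..<s}. (\<Sum>x\<in>{Inr (e, i), Inr (e, Suc i)}. D x) / 2) = (r - 1) * 2"
      unfolding r_def by (rule const_mid[OF assms(4)]) (simp add: DInr[OF e])
    thus ?thesis using edge_sum_split[OF assms(4), of "\<lambda>f. (\<Sum>x\<in>f. D x) / 2"] DInr[OF e, of 1] DInr[OF e, of s] assms(4)
      by (simp add: DInl A_def B_def) (simp add: field_simps)
  qed
  have P3: "(\<Sum>i=0..s. (\<Sum>x\<in>sedge s e i. (D x)\<^sup>2) / 2) = ((A e)\<^sup>2 + (B e)\<^sup>2) / 2 + 4 * r" if e: "e \<in> E" for e
  proof -
    have "(\<Sum>i\<in>{1..<s}. (\<Sum>x\<in>{Inr (e, i), Inr (e, Suc i)}. (D x)\<^sup>2) / 2) = (r - 1) * 4"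
      unfolding r_def by (rule const_mid[OF assms(4)]) (simp add: DInr[OF e])
    thus ?thesis using edge_sum_split[OF assms(4), of "\<lambda>f. (\<Sum>x\<in>f. (D x)\<^sup>2) / 2"] DInr[OF e, of 1] DInr[OF e, of s] assms(4)
      by (simp add: DInl A_def B_def) (simp add: field_simps)
  qed
  define K where "K = (\<Sum>e\<in>E. A e + B e)"
  define Q2 where "Q2 = (\<Sum>e\<in>E. (A e)\<^sup>2 + (B e)\<^sup>2)"
  have K4: "K = 4 * m"
  proof -
    have "real (\<Sum>e\<in>E. \<Sum>x\<in>e. degree E x) = (\<Sum>e\<in>E. \<Sum>x\<in>e. d x)" unfolding d_def by simp
    also have "\<dots> = K" unfolding K_def A_def B_def by (rule sum.cong[OF refl]) (rule esum)
    finally show ?thesis using assms(3) unfolding m_def by simp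
  qed
  have Q2gt: "Q2 > 8 * m"
  proof -
    have "(\<Sum>e\<in>E. (A e - 2)\<^sup>2 + (B e - 2)\<^sup>2) = (\<Sum>e\<in>E. ((A e)\<^sup>2 + (B e)\<^sup>2) - 4 * (A e + B e) + 8)"
      by (rule sum.cong) (simp_all add: power2_eq_square algebra_simps)
    also have "\<dots> = Q2 - 4 * K + 8 * m"
      unfolding Q2_def K_def m_def by (simp add: sum.distrib sum_subtractf sum_distrib_left)
    finally have eqQ: "(\<Sum>e\<in>E. (A e - 2)\<^sup>2 + (B e - 2)\<^sup>2) = Q2 - 8 * m" using K4 by simp
    have "E \<noteq> {}" using assms(2) by auto
    then obtain e1 x1 where e1: "e1 \<in> E" "x1 \<in> e1" "degree E x1 = 1" using tree_leaf[OF assms(1)] by blast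
    have "x1 = end1 e1 \<or> x1 = end2 e1" using twoset_ends[OF ts e1(1)] e1(2) by blast
    hence "(A e1 - 2)\<^sup>2 + (B e1 - 2)\<^sup>2 > 0" unfolding A_def B_def d_def using e1(3)
      by (auto simp: add_pos_nonneg add_nonneg_pos)
    hence "(\<Sum>e\<in>E. (A e - 2)\<^sup>2 + (B e - 2)\<^sup>2) > 0"
      by (intro sum_pos2[OF fE e1(1)]) auto
    thus ?thesis using eqQ by simp
  qed
  have sumP: "(\<Sum>f\<in>SE. \<Prod>x\<in>f. D x) = 2 * K + 4 * (r - 1) * m"
    unfolding sSE K_def m_def by (subst sum.cong[OF refl P1], assumption) (simp add: sum.distrib sum_distrib_left)
  have sumM: "(\<Sum>f\<in>SE. (\<Sum>x\<in>f. D x) / 2) = K / 2 + 2 * r * m"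
    unfolding sSE K_def m_def by (subst sum.cong[OF refl P2], assumption) (simp add: sum.distrib sum_divide_distrib[symmetric])
  have sumS: "(\<Sum>f\<in>SE. (\<Sum>x\<in>f. (D x)\<^sup>2) / 2) = Q2 / 2 + 4 * r * m"
    unfolding sSE Q2_def m_def by (subst sum.cong[OF refl P3], assumption) (simp add: sum.distrib sum_divide_distrib[symmetric])
  have nz: "(r + 1) * m \<noteq> 0" using m0 r1 by simp
  have e1: "K / 2 + 2 * r * m = 2 * ((r + 1) * m)" using K4 by (simp add: algebra_simps)
  have e2: "2 * K + 4 * (r - 1) * m = 4 * ((r + 1) * m)" using K4 by (simp add: algebra_simps)
  have mean: "assort_mean SE = 2"
    unfolding assort_mean_def D_def[symmetric] sumM cardSE e1 using nz by simp
  have num: "assort_num SE = 0"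
    unfolding assort_num_def D_def[symmetric] sumP cardSE mean e2 using nz by simp
  have den: "assort_den SE > 0"
  proof -
    have "assort_den SE = (Q2 / 2 + 4 * r * m) / ((r + 1) * m) - 4"
      unfolding assort_den_def D_def[symmetric] sumS cardSE mean by simp
    also have "\<dots> = (Q2 / 2 - 4 * m) / ((r + 1) * m)" using nz by (simp add: field_simps)
    also have "\<dots> > 0" using m0 r1 Q2gt by (intro divide_pos_pos) auto
    finally show ?thesis .
  qed
  show ?thesis unfolding neutral_def SE_def[symmetric]
  proof (intro conjI)
    show "finite SE" unfolding SE_def subdiv_image[OF assms(4)] using fE by simp
    have "real (card SE) > 0" unfolding cardSE using m0 r1 by (intro mult_pos_pos) auto
    thus "1 \<le> card SE" by simp
    show "assort_den SE \<noteq> 0" using den by simp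
    show "assortativity SE = 0" unfolding assortativity_def num by simp
  qed
qed

end
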